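(* For every $n\geq 2$ and every $r\in[n]$, $$\sum_{T\in \mathcal P_{n}^{(r)}}t^{\mathrm{eld}(T)}\prod_{i=1}^{n}x_i^{\mathrm{young}_T(i)}=x_r\prod_{k=1}^{n-2}(x_1+\cdots+x_{n}+kt).$$
   Context: All trees are rooted trees whose vertices are labeled by distinct positive integers. A vertex $j$ is a descendant of $i$ if the path from the root to $j$ passes through $i$ (every vertex is a descendant of itself); $\beta_T(i)$ is the smallest descendant of $i$. A child of $i$ is a descendant joined to $i$ by an edge; children of the same vertex are brothers. A plane tree is a rooted tree in which the children of each vertex are linearly ordered (left to right). In a plane tree $T$, a vertex $j$ is elder if it has a brother $k$ to its right with $\beta_T(k)<\beta_T(j)$. $\mathrm{eld}_T(v)$ is the number of elder children of $v$, $\mathrm{eld}(T)$ the total number of elder vertices, $\deg_T(v)$ the number of children of $v$, and $\mathrm{young}_T(v)=\deg_T(v)-\mathrm{eld}_T(v)$. $\mathcal P_n^{(r)}$ is the set of plane trees on $[n]=\{1,\dots,n\}$ with root $r$. The empty product equals $1$. *)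

theory Defs
  imports Main
begin

text \<open>A plane tree: a labelled root together with the ordered (left to right) list of
  subtrees rooted at its children.\<close>
datatype ptree = PNode nat "ptree list"

fun root :: "ptree \<Rightarrow> nat" where
  "root (PNode v ts) = v"

fun children :: "ptree \<Rightarrow> ptree list" where
  "children (PNode v ts) = ts"

fun labels :: "ptree \<Rightarrow> nat list" where
  "labels (PNode v ts) = v # concat (map labels ts)"

text \<open>beta of the root of a subtree: smallest descendant.\<close>
definition beta :: "ptree \<Rightarrow> nat" where
  "beta T = Min (set (labels T))"

definition eld_children :: "ptree list \<Rightarrow> nat" where
  "eld_children ts = card {i. i < length ts \<and>
      (\<exists>k. i < k \<and> k < length ts \<and> beta (ts ! k) < beta (ts ! i))}"

fun eld :: "ptree \<Rightarrow> nat" where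
  "eld (PNode v ts) = eld_children ts + sum_list (map eld ts)"

text \<open>young_T(v) = deg_T(v) - eld_T(v); 0 if v is not a vertex.\<close>
fun young :: "ptree \<Rightarrow> nat \<Rightarrow> nat" where
  "young (PNode w ts) v =
     (if v = w then length ts - eld_children ts else sum_list (map (\<lambda>s. young s v) ts))"

definition plane_trees :: "nat \<Rightarrow> nat \<Rightarrow> ptree set" where
  "plane_trees n r = {T. distinct (labels T) \<and> set (labels T) = {1..n} \<and> root T = r}"

end

theory Submission
  imports Defs "HOL-Combinatorics.Multiset_Permutations"
begin

fun wt :: "'a::comm_ring_1 \<Rightarrow> (nat \<Rightarrow> 'a) \<Rightarrow> ptree \<Rightarrow> 'a" where
  "wt t x (PNode v ts) = t ^ eld_children ts * x v ^ (length ts - eld_children ts) * prod_list (map (wt t x) ts)"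

lemma young_notin: "v \<notin> set (labels T) \<Longrightarrow> young T v = 0"
  by (induction T) (auto intro!: sum_list_eq_0_iff[THEN iffD2])

lemma prod_pow_sum_list:
  fixes x :: "nat \<Rightarrow> 'a::comm_ring_1"
  shows "(\<Prod>i\<in>I. x i ^ sum_list (map (\<lambda>s. f s i) ts)) = prod_list (map (\<lambda>s. \<Prod>i\<in>I. x i ^ f s i) ts)"
  by (induction ts) (auto simp: power_add prod.distrib)

lemma pow_sum_list:
  fixes t :: "'a::comm_ring_1"
  shows "t ^ sum_list (map f ts) = prod_list (map (\<lambda>s. t ^ f s) ts)"
  by (induction ts) (auto simp: power_add)

lemma prod_list_mult:
  fixes f :: "_ \<Rightarrow> 'a::comm_ring_1"
  shows "prod_list (map f ts) * prod_list (map g ts) = prod_list (map (\<lambda>s. f s * g s) ts)"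
  by (induction ts) (auto simp: algebra_simps)

lemma wt_eq:
  fixes t :: "'a::comm_ring_1"
  assumes "finite I" "distinct (labels T)" "set (labels T) \<subseteq> I"
  shows "t ^ eld T * (\<Prod>i\<in>I. x i ^ young T i) = wt t x T"
  using assms(2,3)
proof (induction T)
  case (PNode v ts)
  have vI: "v \<in> I" using PNode.prems by auto
  have notin: "\<forall>s\<in>set ts. v \<notin> set (labels s)" using PNode.prems(1) by auto
  have z: "sum_list (map (\<lambda>s. young s v) ts) = 0"
    using notin by (auto intro!: sum_list_eq_0_iff[THEN iffD2] young_notin)
  have "(\<Prod>i\<in>I. x i ^ young (PNode v ts) i)
      = (\<Prod>i\<in>I. (if i = v then x v ^ (length ts - eld_children ts) else 1) * x i ^ sum_list (map (\<lambda>s. young s i) ts))"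
    by (rule prod.cong) (auto simp: z)
  also have "\<dots> = x v ^ (length ts - eld_children ts) * prod_list (map (\<lambda>s. \<Prod>i\<in>I. x i ^ young s i) ts)"
    by (simp add: prod.distrib prod.delta[OF assms(1)] vI prod_pow_sum_list)
  finally have 1: "(\<Prod>i\<in>I. x i ^ young (PNode v ts) i) = \<dots>" .
  have IH: "\<forall>s\<in>set ts. t ^ eld s * (\<Prod>i\<in>I. x i ^ young s i) = wt t x s"
    using PNode by (auto simp: distinct_concat_iff)
  have "t ^ eld (PNode v ts) * (\<Prod>i\<in>I. x i ^ young (PNode v ts) i)
     = t ^ eld_children ts * x v ^ (length ts - eld_children ts) * (prod_list (map (\<lambda>s. t ^ eld s) ts) * prod_list (map (\<lambda>s. \<Prod>i\<in>I. x i ^ young s i) ts))"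
    unfolding 1 by (simp add: power_add pow_sum_list algebra_simps)
  also have "\<dots> = wt t x (PNode v ts)"
    unfolding prod_list_mult using IH by (simp cong: map_cong)
  finally show ?case .
qed

definition rf :: "'a::comm_ring_1 \<Rightarrow> 'a \<Rightarrow> nat \<Rightarrow> 'a" where
  "rf t z k = (\<Prod>i<k. z + of_nat i * t)"

lemma rf_0[simp]: "rf t z 0 = 1" by (simp add: rf_def)
lemma rf_Suc: "rf t z (Suc k) = rf t z k * (z + of_nat k * t)" by (simp add: rf_def)

lemma card_lt_Suc:
  "card {i. i < Suc n \<and> Q i} = (if Q 0 then 1 else 0) + card {i. i < n \<and> Q (Suc i)}"
proof -
  have e: "{i. i < Suc n \<and> Q i} = (if Q 0 then {0} else {}) \<union> Suc ` {i. i < n \<and> Q (Suc i)}"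
    by (auto simp: image_iff less_Suc_eq_0_disj)
  have "card ((if Q 0 then {0} else {}) \<union> Suc ` {i. i < n \<and> Q (Suc i)}) =
        card (if Q 0 then {0::nat} else {}) + card (Suc ` {i. i < n \<and> Q (Suc i)})"
    by (rule card_Un_disjoint) auto
  also have "card (Suc ` {i. i < n \<and> Q (Suc i)}) = card {i. i < n \<and> Q (Suc i)}"
    by (rule card_image) auto
  finally show ?thesis using e by simp
qed

lemma eldc_Cons: "eld_children (T # ts) = (if \<exists>s\<in>set ts. beta s < beta T then 1 else 0) + eld_children ts"
proof -
  have ex: "\<And>Q m. (\<exists>k. m < k \<and> k < Suc (length ts) \<and> Q k) = (\<exists>j. m \<le> j \<and> j < length ts \<and> Q (Suc j))"
  proof -
    fix Q :: "nat \<Rightarrow> bool" and m :: nat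
    show "(\<exists>k. m < k \<and> k < Suc (length ts) \<and> Q k) = (\<exists>j. m \<le> j \<and> j < length ts \<and> Q (Suc j))"
    proof
      assume "\<exists>k. m < k \<and> k < Suc (length ts) \<and> Q k"
      then obtain k where k: "m < k" "k < Suc (length ts)" "Q k" by blast
      then obtain j where "k = Suc j" by (cases k) auto
      then show "\<exists>j. m \<le> j \<and> j < length ts \<and> Q (Suc j)" using k by (intro exI[of _ j]) (auto simp: less_Suc_eq_le)
    next
      assume "\<exists>j. m \<le> j \<and> j < length ts \<and> Q (Suc j)"
      then show "\<exists>k. m < k \<and> k < Suc (length ts) \<and> Q k" by (metis Suc_le_lessD Suc_less_eq le_imp_less_Suc)
    qed
  qed
  have a: "(\<exists>k>0. k < Suc (length ts) \<and> beta ((T # ts) ! k) < beta ((T # ts) ! 0)) = (\<exists>s\<in>set ts. beta s < beta T)"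
  proof -
    have "(\<exists>k>0. k < Suc (length ts) \<and> beta ((T # ts) ! k) < beta ((T # ts) ! 0)) = (\<exists>j. 0 \<le> j \<and> j < length ts \<and> beta ((T#ts) ! Suc j) < beta T)"
      using ex[of 0 "\<lambda>k. beta ((T # ts) ! k) < beta T"] by simp
    also have "\<dots> = (\<exists>j<length ts. beta (ts!j) < beta T)" by simp
    also have "\<dots> = (\<exists>s\<in>set ts. beta s < beta T)" by (metis in_set_conv_nth)
    finally show ?thesis .
  qed
  have b: "\<And>i. (\<exists>k>Suc i. k < Suc (length ts) \<and> beta ((T # ts) ! k) < beta ((T # ts) ! Suc i)) =
     (\<exists>k>i. k < length ts \<and> beta (ts ! k) < beta (ts ! i))"
    using ex by (auto simp: Suc_le_eq)
  define Q where "Q = (\<lambda>i. \<exists>k>i. k < Suc (length ts) \<and> beta ((T # ts) ! k) < beta ((T # ts) ! i))"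
  have "eld_children (T # ts) = card {i. i < Suc (length ts) \<and> Q i}"
    unfolding eld_children_def Q_def by simp
  also have "\<dots> = (if Q 0 then 1 else 0) + card {i. i < length ts \<and> Q (Suc i)}"
    by (rule card_lt_Suc)
  also have "Q 0 = (\<exists>s\<in>set ts. beta s < beta T)" using a unfolding Q_def by simp
  also have "{i. i < length ts \<and> Q (Suc i)} = {i. i < length ts \<and> (\<exists>k>i. k < length ts \<and> beta (ts ! k) < beta (ts ! i))}"
    unfolding Q_def using b by simp
  finally show ?thesis unfolding eld_children_def .
qed

lemma eldc_Nil[simp]: "eld_children [] = 0" by (simp add: eld_children_def)

lemma eldc_le: "eld_children ts \<le> length ts"
proof -
  have "eld_children ts \<le> card {..<length ts}" unfolding eld_children_def
    by (rule card_mono) auto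
  then show ?thesis by simp
qed

lemma perm_sum:
  fixes t z :: "'a::comm_ring_1"
  assumes "finite B" "inj_on beta B"
  shows "(\<Sum>ts\<in>permutations_of_set B. t ^ eld_children ts * z ^ (length ts - eld_children ts)) = rf t z (card B)"
  using assms
proof (induction "card B" arbitrary: B)
  case 0
  then show ?case by simp
next
  case (Suc k B)
  have ne: "B \<noteq> {}" using Suc.hyps(2) by auto
  have fin: "\<And>T. finite (permutations_of_set (B - {T}))" using Suc.prems(1) by simp
  let ?f = "\<lambda>ts. t ^ eld_children ts * z ^ (length ts - eld_children ts)"
  obtain T0 where T0: "T0 \<in> B" "\<forall>T\<in>B. beta T0 \<le> beta T"
  proof -
    have "Min (beta ` B) \<in> beta ` B" using Suc.prems(1) ne by (intro Min_in) auto
    then obtain T0 where "T0 \<in> B" "beta T0 = Min (beta ` B)" by auto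
    moreover have "\<forall>T\<in>B. Min (beta ` B) \<le> beta T" using Suc.prems(1) by auto
    ultimately show ?thesis using that by auto
  qed
  have cond: "\<And>T. T \<in> B \<Longrightarrow> (\<exists>s\<in>B - {T}. beta s < beta T) = (T \<noteq> T0)"
  proof -
    fix T assume T: "T \<in> B"
    show "(\<exists>s\<in>B - {T}. beta s < beta T) = (T \<noteq> T0)"
    proof
      assume "\<exists>s\<in>B - {T}. beta s < beta T"
      then show "T \<noteq> T0" using T0 by force
    next
      assume "T \<noteq> T0"
      then have "beta T0 \<noteq> beta T" using Suc.prems(2) T T0(1) \<open>T \<noteq> T0\<close> unfolding inj_on_def by metis
      then show "\<exists>s\<in>B - {T}. beta s < beta T" using T0 T \<open>T \<noteq> T0\<close> by (metis DiffI le_neq_implies_less singletonD)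
    qed
  qed
  have IH: "\<And>T. T \<in> B \<Longrightarrow> sum ?f (permutations_of_set (B - {T})) = rf t z k"
  proof -
    fix T assume "T \<in> B"
    then have "k = card (B - {T})" using Suc.hyps(2) Suc.prems(1) by simp
    then show "sum ?f (permutations_of_set (B - {T})) = rf t z k"
      using Suc.hyps(1)[of "B - {T}"] Suc.prems by (auto intro: inj_on_subset)
  qed
  have "sum ?f (permutations_of_set B) = (\<Sum>T\<in>B. sum ?f ((\<lambda>xs. T # xs) ` permutations_of_set (B - {T})))"
    unfolding permutations_of_set_nonempty[OF ne]
    by (rule sum.UNION_disjoint) (use Suc.prems(1) fin in auto)
  also have "\<dots> = (\<Sum>T\<in>B. sum (\<lambda>ts. ?f (T # ts)) (permutations_of_set (B - {T})))"
    by (rule sum.cong) (auto simp: sum.reindex)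
  also have "\<dots> = (\<Sum>T\<in>B. (if T = T0 then z else t) * rf t z k)"
  proof (rule sum.cong[OF refl])
    fix T assume T: "T \<in> B"
    have "sum (\<lambda>ts. ?f (T # ts)) (permutations_of_set (B - {T})) = sum (\<lambda>ts. (if T = T0 then z else t) * ?f ts) (permutations_of_set (B - {T}))"
    proof (rule sum.cong[OF refl])
      fix ts assume ts: "ts \<in> permutations_of_set (B - {T})"
      then have st: "set ts = B - {T}" by (simp add: permutations_of_set_def)
      have le: "eld_children ts \<le> length ts" by (rule eldc_le)
      show "?f (T # ts) = (if T = T0 then z else t) * ?f ts"
        using cond[OF T] le unfolding eldc_Cons st
        by (auto simp: Suc_diff_le)
    qed
    also have "\<dots> = (if T = T0 then z else t) * rf t z k" using IH[OF T] by (simp add: sum_distrib_left[symmetric])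
    finally show "sum (\<lambda>ts. ?f (T # ts)) (permutations_of_set (B - {T})) = (if T = T0 then z else t) * rf t z k" .
  qed
  also have "\<dots> = (z + of_nat k * t) * rf t z k"
  proof -
    have "(\<Sum>T\<in>B. (if T = T0 then z else t)) = z + (\<Sum>T\<in>B - {T0}. t)"
      using Suc.prems(1) T0(1) by (simp add: sum.remove)
    also have "\<dots> = z + of_nat k * t" using Suc.hyps(2) Suc.prems(1) T0(1) by (simp flip: Suc.hyps(2))
    finally show ?thesis by (simp add: sum_distrib_right[symmetric])
  qed
  finally show ?case by (simp add: rf_Suc mult.commute flip: Suc.hyps(2))
qed

lemma rf_shift: "rf t z (Suc k) = z * rf t (z + t) k"
proof (induction k)
  case 0 then show ?case by (simp add: rf_def)
next
  case (Suc k)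
  have "rf t z (Suc (Suc k)) = rf t z (Suc k) * (z + of_nat (Suc k) * t)" by (rule rf_Suc)
  also have "\<dots> = z * (rf t (z + t) k * ((z + t) + of_nat k * t))" unfolding Suc by (simp add: algebra_simps)
  also have "\<dots> = z * rf t (z + t) (Suc k)" by (simp add: rf_Suc)
  finally show ?case .
qed

lemma rf_vandermonde:
  fixes a b t :: "'a::comm_ring_1"
  shows "rf t (a + b) n = (\<Sum>j\<le>n. of_nat (n choose j) * rf t a j * rf t b (n - j))"
proof (induction n)
  case 0 then show ?case by simp
next
  case (Suc n)
  let ?f = "rf t a" and ?g = "rf t b"
  have trm: "?f j * ?g (n - j) * (a + b + of_nat n * t) = ?f (Suc j) * ?g (n - j) + ?f j * ?g (Suc n - j)"
    if "j \<le> n" for j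
  proof -
    have "of_nat n * t = of_nat j * t + of_nat (n - j) * t" using that by (simp add: of_nat_diff algebra_simps)
    moreover have "Suc n - j = Suc (n - j)" using that by simp
    ultimately show ?thesis by (simp add: rf_Suc algebra_simps)
  qed
  have "rf t (a + b) (Suc n) = (\<Sum>j\<le>n. of_nat (n choose j) * ?f j * ?g (n - j)) * (a + b + of_nat n * t)"
    by (simp add: rf_Suc Suc)
  also have "\<dots> = (\<Sum>j\<le>n. of_nat (n choose j) * (?f j * ?g (n - j) * (a + b + of_nat n * t)))"
    unfolding sum_distrib_right by (simp add: mult.assoc)
  also have "\<dots> = (\<Sum>j\<le>n. of_nat (n choose j) * ?f (Suc j) * ?g (n - j)) + (\<Sum>j\<le>n. of_nat (n choose j) * ?f j * ?g (Suc n - j))"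
  proof -
    have "(\<Sum>j\<le>n. of_nat (n choose j) * (?f j * ?g (n - j) * (a + b + of_nat n * t)))
        = (\<Sum>j\<le>n. of_nat (n choose j) * (?f (Suc j) * ?g (n - j) + ?f j * ?g (Suc n - j)))"
      by (rule sum.cong[OF refl]) (simp add: trm)
    also have "\<dots> = (\<Sum>j\<le>n. of_nat (n choose j) * ?f (Suc j) * ?g (n - j)) + (\<Sum>j\<le>n. of_nat (n choose j) * ?f j * ?g (Suc n - j))"
      by (simp add: sum.distrib distrib_left mult.assoc)
    finally show ?thesis .
  qed
  also have "(\<Sum>j\<le>n. of_nat (n choose j) * ?f j * ?g (Suc n - j)) = (\<Sum>j\<le>Suc n. of_nat (n choose j) * ?f j * ?g (Suc n - j))"
    by (simp add: binomial_eq_0)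
  also have "\<dots> = ?g (Suc n) + (\<Sum>j\<le>n. of_nat (n choose Suc j) * ?f (Suc j) * ?g (n - j))"
    by (subst sum.atMost_Suc_shift) simp
  also have "(\<Sum>j\<le>n. of_nat (n choose j) * ?f (Suc j) * ?g (n - j)) + (?g (Suc n) + (\<Sum>j\<le>n. of_nat (n choose Suc j) * ?f (Suc j) * ?g (n - j)))
     = ?g (Suc n) + (\<Sum>j\<le>n. of_nat (Suc n choose Suc j) * ?f (Suc j) * ?g (n - j))"
    by (simp add: sum.distrib algebra_simps)
  also have "\<dots> = (\<Sum>j\<le>Suc n. of_nat (Suc n choose j) * ?f j * ?g (Suc n - j))"
    by (subst sum.atMost_Suc_shift) simp
  finally show ?case .
qed

lemma sum_pow_card:
  fixes h :: "nat \<Rightarrow> 'a::comm_ring_1"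
  assumes "finite U"
  shows "(\<Sum>A\<in>Pow U. h (card A)) = (\<Sum>j\<le>card U. of_nat (card U choose j) * h j)"
proof -
  have "(\<Sum>A\<in>Pow U. h (card A)) = (\<Sum>j\<in>{..card U}. \<Sum>A\<in>{A\<in>Pow U. card A = j}. h (card A))"
    by (rule sum.group[symmetric]) (use assms in \<open>auto intro: card_mono\<close>)
  also have "\<dots> = (\<Sum>j\<le>card U. of_nat (card U choose j) * h j)"
  proof (rule sum.cong[OF refl])
    fix j
    have "{A\<in>Pow U. card A = j} = {B. B \<subseteq> U \<and> card B = j}" by auto
    then show "(\<Sum>A\<in>{A\<in>Pow U. card A = j}. h (card A)) = of_nat (card U choose j) * h j"
      using n_subsets[OF assms, of j] by simp
  qed
  finally show ?thesis .
qed

lemma sum_pow_card_sumx: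
  fixes h :: "nat \<Rightarrow> 'a::comm_ring_1" and x :: "nat \<Rightarrow> 'a"
  assumes "finite U" "card U = Suc n"
  shows "(\<Sum>A\<in>Pow U. h (card A) * sum x A) = sum x U * (\<Sum>j\<le>n. of_nat (n choose j) * h (Suc j))"
proof -
  have "(\<Sum>A\<in>Pow U. h (card A) * sum x A) = (\<Sum>A\<in>Pow U. \<Sum>v\<in>{v\<in>U. v \<in> A}. h (card A) * x v)"
    by (rule sum.cong[OF refl]) (auto simp: sum_distrib_left intro!: sum.cong)
  also have "\<dots> = (\<Sum>v\<in>U. \<Sum>A\<in>{A\<in>Pow U. v \<in> A}. h (card A) * x v)"
    by (rule sum.swap_restrict) (use assms in auto)
  also have "\<dots> = (\<Sum>v\<in>U. x v * (\<Sum>j\<le>n. of_nat (n choose j) * h (Suc j)))"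
  proof (rule sum.cong[OF refl])
    fix v assume v: "v \<in> U"
    have fin: "finite (U - {v})" using assms by simp
    have cU: "card (U - {v}) = n" using assms v by simp
    have img: "{A\<in>Pow U. v \<in> A} = insert v ` Pow (U - {v})"
    proof
      show "{A \<in> Pow U. v \<in> A} \<subseteq> insert v ` Pow (U - {v})"
      proof
        fix A assume "A \<in> {A \<in> Pow U. v \<in> A}"
        then have "A = insert v (A - {v})" "A - {v} \<in> Pow (U - {v})" by auto
        then show "A \<in> insert v ` Pow (U - {v})" by blast
      qed
    qed (use v in auto)
    have inj: "inj_on (insert v) (Pow (U - {v}))"
      by (rule inj_onI) (metis Diff_insert_absorb Pow_iff insert_Diff_if insert_absorb subset_Diff_insert)
    have "(\<Sum>A\<in>{A\<in>Pow U. v \<in> A}. h (card A) * x v) = (\<Sum>B\<in>Pow (U - {v}). h (card (insert v B)) * x v)"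
      unfolding img by (simp add: sum.reindex[OF inj])
    also have "\<dots> = (\<Sum>B\<in>Pow (U - {v}). h (Suc (card B))) * x v"
    proof -
      have "\<And>B. B \<in> Pow (U - {v}) \<Longrightarrow> card (insert v B) = Suc (card B)"
      proof -
        fix B assume "B \<in> Pow (U - {v})"
        then have "finite B" "v \<notin> B" using fin by (auto dest: finite_subset)
        then show "card (insert v B) = Suc (card B)" by simp
      qed
      then show ?thesis by (simp add: sum_distrib_right)
    qed
    also have "\<dots> = x v * (\<Sum>j\<le>n. of_nat (n choose j) * h (Suc j))"
      using sum_pow_card[OF fin, of "\<lambda>j. h (Suc j)"] cU by (simp add: mult.commute)
    finally show "(\<Sum>A\<in>{A\<in>Pow U. v \<in> A}. h (card A) * x v) = x v * (\<Sum>j\<le>n. of_nat (n choose j) * h (Suc j))" .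
  qed
  also have "\<dots> = sum x U * (\<Sum>j\<le>n. of_nat (n choose j) * h (Suc j))"
    by (simp add: sum_distrib_right)
  finally show ?thesis .
qed

lemma pascal_sum:
  fixes w :: "nat \<Rightarrow> 'a::comm_ring_1"
  shows "(\<Sum>j\<le>n. of_nat (Suc n choose j) * w j) = (\<Sum>j\<le>n. of_nat (n choose j) * w j) + (\<Sum>i<n. of_nat (n choose i) * w (Suc i))"
proof -
  have "(\<Sum>j\<le>n. of_nat (Suc n choose j) * w j) = (\<Sum>j<Suc n. of_nat (Suc n choose j) * w j)"
    by (simp add: lessThan_Suc_atMost)
  also have "\<dots> = w 0 + (\<Sum>i<n. of_nat (Suc n choose Suc i) * w (Suc i))"
    by (subst sum.lessThan_Suc_shift) simp
  also have "\<dots> = w 0 + (\<Sum>i<n. of_nat (n choose Suc i) * w (Suc i)) + (\<Sum>i<n. of_nat (n choose i) * w (Suc i))"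
    by (simp add: sum.distrib algebra_simps)
  also have "w 0 + (\<Sum>i<n. of_nat (n choose Suc i) * w (Suc i)) = (\<Sum>j<Suc n. of_nat (n choose j) * w j)"
    by (subst sum.lessThan_Suc_shift) simp
  also have "\<dots> = (\<Sum>j\<le>n. of_nat (n choose j) * w j)"
    by (simp add: lessThan_Suc_atMost)
  finally show ?thesis .
qed

lemma key_identity:
  fixes c y t :: "'a::comm_ring_1" and x :: "nat \<Rightarrow> 'a"
  assumes fin: "finite U"
  shows "(\<Sum>A\<in>Pow U. rf t y (card A) * (if A = U then 1 else (c + sum x A) * rf t (c + sum x U + t) (card U - card A - 1)))
      = (if U = {} then 1 else (c + y) * rf t (c + sum x U + y + t) (card U - 1))"
proof (cases "U = {}")
  case True then show ?thesis by simp
next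
  case False
  then obtain n where cU: "card U = Suc n" using fin by (metis card_0_eq not0_implies_Suc)
  define Z where "Z = c + sum x U"
  define Q where "Q = rf t (Z + t)"
  define w where "w = (\<lambda>j. rf t y j * Q (n - j))"
  define F where "F = (\<lambda>j. if j = Suc n then rf t y j else c * w j)"
  define G where "G = (\<lambda>j. if j = Suc n then 0 else w j)"
  have step1: "(\<Sum>A\<in>Pow U. rf t y (card A) * (if A = U then 1 else (c + sum x A) * rf t (c + sum x U + t) (card U - card A - 1)))
     = (\<Sum>A\<in>Pow U. F (card A) + G (card A) * sum x A)"
  proof (rule sum.cong[OF refl])
    fix A assume A: "A \<in> Pow U"
    have eq: "(A = U) = (card A = Suc n)" using A fin cU by (metis PowD card_subset_eq)
    have le: "card A \<le> Suc n" using A fin cU by (metis PowD card_mono)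
    show "rf t y (card A) * (if A = U then 1 else (c + sum x A) * rf t (c + sum x U + t) (card U - card A - 1)) = F (card A) + G (card A) * sum x A"
      unfolding eq F_def G_def w_def Q_def Z_def cU by (simp add: algebra_simps)
  qed
  also have "\<dots> = (\<Sum>j\<le>Suc n. of_nat (Suc n choose j) * F j) + sum x U * (\<Sum>j\<le>n. of_nat (n choose j) * G (Suc j))"
    by (simp add: sum.distrib sum_pow_card[OF fin] sum_pow_card_sumx[OF fin cU] cU)
  also have "(\<Sum>j\<le>Suc n. of_nat (Suc n choose j) * F j) = c * (\<Sum>j\<le>n. of_nat (Suc n choose j) * w j) + rf t y (Suc n)"
    by (simp add: F_def sum_distrib_left algebra_simps)
  also have "(\<Sum>j\<le>n. of_nat (n choose j) * G (Suc j)) = (\<Sum>i<n. of_nat (n choose i) * w (Suc i))"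
    by (simp add: G_def lessThan_Suc_atMost[symmetric])
  finally have L: "(\<Sum>A\<in>Pow U. rf t y (card A) * (if A = U then 1 else (c + sum x A) * rf t (c + sum x U + t) (card U - card A - 1)))
     = c * (\<Sum>j\<le>n. of_nat (n choose j) * w j) + Z * (\<Sum>i<n. of_nat (n choose i) * w (Suc i)) + rf t y (Suc n)"
    unfolding pascal_sum Z_def by (simp add: algebra_simps)
  have V: "(\<Sum>j\<le>n. of_nat (n choose j) * w j) = rf t (Z + y + t) n"
    using rf_vandermonde[of t y "Z + t" n] by (simp add: w_def Q_def algebra_simps)
  have "y * rf t (Z + y + t) n = y * (\<Sum>i\<le>n. of_nat (n choose i) * rf t (y + t) i * rf t Z (n - i))"
    using rf_vandermonde[of t "y + t" Z n] by (simp add: algebra_simps)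
  also have "\<dots> = (\<Sum>i\<le>n. of_nat (n choose i) * rf t y (Suc i) * rf t Z (n - i))"
    by (simp add: sum_distrib_left rf_shift algebra_simps)
  also have "\<dots> = (\<Sum>i<n. of_nat (n choose i) * rf t y (Suc i) * rf t Z (n - i)) + rf t y (Suc n)"
    by (simp add: lessThan_Suc_atMost[symmetric])
  also have "(\<Sum>i<n. of_nat (n choose i) * rf t y (Suc i) * rf t Z (n - i)) = Z * (\<Sum>i<n. of_nat (n choose i) * w (Suc i))"
  proof -
    have "\<And>i. i < n \<Longrightarrow> rf t Z (n - i) = Z * Q (n - Suc i)"
    proof -
      fix i assume "i < n"
      then have "n - i = Suc (n - Suc i)" by simp
      then show "rf t Z (n - i) = Z * Q (n - Suc i)" by (simp add: rf_shift Q_def)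
    qed
    then show ?thesis by (simp add: sum_distrib_left w_def algebra_simps)
  qed
  finally have R: "y * rf t (Z + y + t) n = Z * (\<Sum>i<n. of_nat (n choose i) * w (Suc i)) + rf t y (Suc n)" .
  have RHS: "(c + y) * rf t (c + sum x U + y + t) (card U - 1) = c * rf t (Z + y + t) n + y * rf t (Z + y + t) n"
    by (simp add: cU Z_def algebra_simps)
  have "(\<Sum>A\<in>Pow U. rf t y (card A) * (if A = U then 1 else (c + sum x A) * rf t (c + sum x U + t) (card U - card A - 1)))
     = (c + y) * rf t (c + sum x U + y + t) (card U - 1)"
    unfolding L RHS V R by (simp add: algebra_simps)
  then show ?thesis using False by simp
qed

lemma root_in: "Defs.root T \<in> set (labels T)" by (cases T) simp
lemma labels_ne: "labels T \<noteq> []" by (cases T) simp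

lemma dist_PNode:
  "distinct (labels (PNode v ts)) \<longleftrightarrow> v \<notin> (\<Union>s\<in>set ts. set (labels s)) \<and> distinct ts \<and> (\<forall>s\<in>set ts. distinct (labels s))
     \<and> (\<forall>s\<in>set ts. \<forall>s'\<in>set ts. s \<noteq> s' \<longrightarrow> set (labels s) \<inter> set (labels s') = {})"
proof -
  have rA: "removeAll [] (map labels ts) = map labels ts"
    by (rule removeAll_id) (use labels_ne in \<open>auto simp: eq_commute[of "[]"]\<close>)
  have "distinct (concat (map labels ts)) \<longleftrightarrow> distinct ts \<and> (\<forall>s\<in>set ts. distinct (labels s))
     \<and> (\<forall>s\<in>set ts. \<forall>s'\<in>set ts. s \<noteq> s' \<longrightarrow> set (labels s) \<inter> set (labels s') = {})"
  proof
    assume d: "distinct (concat (map labels ts))"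
    then have dm: "distinct (map labels ts)" "\<forall>s\<in>set ts. distinct (labels s)"
      "\<forall>ys zs. ys \<in> set (map labels ts) \<and> zs \<in> set (map labels ts) \<and> ys \<noteq> zs \<longrightarrow> set ys \<inter> set zs = {}"
      unfolding distinct_concat_iff rA by auto
    then have "distinct ts" "inj_on labels (set ts)" by (auto simp: distinct_map)
    moreover have "\<forall>s\<in>set ts. \<forall>s'\<in>set ts. s \<noteq> s' \<longrightarrow> set (labels s) \<inter> set (labels s') = {}"
    proof (intro ballI impI)
      fix s s' assume ss: "s \<in> set ts" "s' \<in> set ts" "s \<noteq> s'"
      then have "labels s \<noteq> labels s'" using \<open>inj_on labels (set ts)\<close> unfolding inj_on_def by blast
      then show "set (labels s) \<inter> set (labels s') = {}" using dm(3) ss by auto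
    qed
    ultimately show "distinct ts \<and> (\<forall>s\<in>set ts. distinct (labels s))
     \<and> (\<forall>s\<in>set ts. \<forall>s'\<in>set ts. s \<noteq> s' \<longrightarrow> set (labels s) \<inter> set (labels s') = {})"
      using dm by blast
  next
    assume a: "distinct ts \<and> (\<forall>s\<in>set ts. distinct (labels s))
     \<and> (\<forall>s\<in>set ts. \<forall>s'\<in>set ts. s \<noteq> s' \<longrightarrow> set (labels s) \<inter> set (labels s') = {})"
    have "inj_on labels (set ts)"
    proof (rule inj_onI)
      fix s s' assume "s \<in> set ts" "s' \<in> set ts" "labels s = labels s'"
      then show "s = s'" using a labels_ne[of s] by (metis Int_absorb set_empty)
    qed
    then have "distinct (map labels ts)" using a by (simp add: distinct_map)
    moreover have "\<forall>ys zs. ys \<in> set (map labels ts) \<and> zs \<in> set (map labels ts) \<and> ys \<noteq> zs \<longrightarrow> set ys \<inter> set zs = {}"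
    proof (intro allI impI)
      fix ys zs assume h: "ys \<in> set (map labels ts) \<and> zs \<in> set (map labels ts) \<and> ys \<noteq> zs"
      then obtain s s' where ss: "s \<in> set ts" "s' \<in> set ts" "ys = labels s" "zs = labels s'" by auto
      then have "s \<noteq> s'" using h by auto
      then show "set ys \<inter> set zs = {}" using a ss by simp
    qed
    moreover have "\<forall>ys. ys \<in> set (map labels ts) \<longrightarrow> distinct ys" using a by auto
    ultimately show "distinct (concat (map labels ts))"
      unfolding distinct_concat_iff rA by blast
  qed
  then show ?thesis by simp
qed

lemma length_le_concat: "length ts \<le> length (concat (map labels ts))"
proof (induction ts)
  case (Cons s ts)
  then show ?case using labels_ne[of s] by (cases "labels s") auto
qed simp

lemma finite_trees_bound:
  assumes "finite S"
  shows "finite {T. set (labels T) \<subseteq> S \<and> length (labels T) \<le> k}"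
proof (induction k)
  case 0
  have "{T. set (labels T) \<subseteq> S \<and> length (labels T) \<le> 0} = {}" using labels_ne by blast
  then show ?case by (metis finite.emptyI)
next
  case (Suc k)
  let ?Tk = "{T. set (labels T) \<subseteq> S \<and> length (labels T) \<le> k}"
  have "{T. set (labels T) \<subseteq> S \<and> length (labels T) \<le> Suc k} \<subseteq>
        (\<lambda>(v, ts). PNode v ts) ` (S \<times> {ts. set ts \<subseteq> ?Tk \<and> length ts \<le> k})"
  proof
    fix T assume T: "T \<in> {T. set (labels T) \<subseteq> S \<and> length (labels T) \<le> Suc k}"
    obtain v ts where Tv: "T = PNode v ts" by (cases T)
    have len: "length (concat (map labels ts)) \<le> k" using T Tv by simp
    have "\<forall>s\<in>set ts. length (labels s) \<le> k"
    proof
      fix s assume s: "s \<in> set ts"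
      have "length (labels s) \<le> length (concat (map labels ts))"
        using s by (simp add: length_concat member_le_sum_list)
      then show "length (labels s) \<le> k" using len by simp
    qed
    moreover have "\<forall>s\<in>set ts. set (labels s) \<subseteq> S" using T Tv by auto
    moreover have "length ts \<le> k" using len length_le_concat[of ts] by simp
    moreover have "v \<in> S" using T Tv by simp
    ultimately show "T \<in> (\<lambda>(v, ts). PNode v ts) ` (S \<times> {ts. set ts \<subseteq> ?Tk \<and> length ts \<le> k})"
      using Tv by (auto intro!: image_eqI[of _ _ "(v, ts)"])
  qed
  moreover have "finite ((\<lambda>(v, ts). PNode v ts) ` (S \<times> {ts. set ts \<subseteq> ?Tk \<and> length ts \<le> k}))"
    using assms Suc.IH by (intro finite_imageI finite_cartesian_product finite_lists_length_le)
  ultimately show ?case by (rule finite_subset)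
qed

lemma finite_trees:
  assumes "finite S"
  shows "finite {T. set (labels T) \<subseteq> S \<and> distinct (labels T)}"
proof -
  have "{T. set (labels T) \<subseteq> S \<and> distinct (labels T)} \<subseteq> {T. set (labels T) \<subseteq> S \<and> length (labels T) \<le> card S}"
    using assms by (auto simp flip: distinct_card intro: card_mono)
  then show ?thesis using finite_trees_bound[OF assms] by (rule finite_subset)
qed

definition forests :: "nat set \<Rightarrow> nat set \<Rightarrow> (nat \<Rightarrow> ptree) set" where
  "forests S R = {f. (\<forall>v. v \<notin> R \<longrightarrow> f v = undefined) \<and>
     (\<forall>v\<in>R. Defs.root (f v) = v \<and> distinct (labels (f v))) \<and>
     (\<forall>v\<in>R. \<forall>w\<in>R. v \<noteq> w \<longrightarrow> set (labels (f v)) \<inter> set (labels (f w)) = {}) \<and>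
     (\<Union>v\<in>R. set (labels (f v))) = S}"

definition comb :: "nat \<Rightarrow> nat set \<Rightarrow> (nat set \<times> (nat \<Rightarrow> ptree) \<times> ptree list) \<Rightarrow> (nat \<Rightarrow> ptree)" where
  "comb a R = (\<lambda>(A, g, ts). (\<lambda>v. if v = a then PNode a ts else if v \<in> R then g v else undefined))"

definition chl :: "ptree list \<Rightarrow> nat \<Rightarrow> ptree" where
  "chl ts v = (THE s. s \<in> set ts \<and> Defs.root s = v)"

definition dec :: "nat \<Rightarrow> nat set \<Rightarrow> (nat \<Rightarrow> ptree) \<Rightarrow> (nat set \<times> (nat \<Rightarrow> ptree) \<times> ptree list)" where
  "dec a R f = (Defs.root ` set (children (f a)),
      (\<lambda>v. if v \<in> R - {a} then f v else if v \<in> Defs.root ` set (children (f a)) then chl (children (f a)) v else undefined),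
      children (f a))"

lemma chl_eq:
  assumes "\<forall>s\<in>set ts. \<forall>s'\<in>set ts. s \<noteq> s' \<longrightarrow> set (labels s) \<inter> set (labels s') = {}" "s \<in> set ts"
  shows "chl ts (Defs.root s) = s"
  unfolding chl_def
proof (rule the_equality)
  fix s' assume "s' \<in> set ts \<and> Defs.root s' = Defs.root s"
  then show "s' = s" using assms root_in[of s] root_in[of s'] by (metis disjoint_iff)
qed (use assms in auto)

lemma forestsD:
  assumes "f \<in> forests S R"
  shows "\<And>v. v \<notin> R \<Longrightarrow> f v = undefined"
    "\<And>v. v \<in> R \<Longrightarrow> Defs.root (f v) = v"
    "\<And>v. v \<in> R \<Longrightarrow> distinct (labels (f v))"
    "\<And>v w. v \<in> R \<Longrightarrow> w \<in> R \<Longrightarrow> v \<noteq> w \<Longrightarrow> set (labels (f v)) \<inter> set (labels (f w)) = {}"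
    "(\<Union>v\<in>R. set (labels (f v))) = S"
  using assms unfolding forests_def by auto

lemma forestsI:
  assumes "\<And>v. v \<notin> R \<Longrightarrow> f v = undefined"
    "\<And>v. v \<in> R \<Longrightarrow> Defs.root (f v) = v"
    "\<And>v. v \<in> R \<Longrightarrow> distinct (labels (f v))"
    "\<And>v w. v \<in> R \<Longrightarrow> w \<in> R \<Longrightarrow> v \<noteq> w \<Longrightarrow> set (labels (f v)) \<inter> set (labels (f w)) = {}"
    "(\<Union>v\<in>R. set (labels (f v))) = S"
  shows "f \<in> forests S R"
  using assms unfolding forests_def by auto

lemma forests_finite:
  assumes "finite S" "finite R"
  shows "finite (forests S R)"
proof -
  have "forests S R \<subseteq> PiE R (\<lambda>_. {T. set (labels T) \<subseteq> S \<and> distinct (labels T)})"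
  proof
    fix f assume f: "f \<in> forests S R"
    show "f \<in> PiE R (\<lambda>_. {T. set (labels T) \<subseteq> S \<and> distinct (labels T)})"
      unfolding PiE_def Pi_def extensional_def using forestsD[OF f] by blast
  qed
  moreover have "finite (PiE R (\<lambda>_. {T. set (labels T) \<subseteq> S \<and> distinct (labels T)}))"
    using assms by (intro finite_PiE finite_trees) auto
  ultimately show ?thesis by (rule finite_subset)
qed

lemma forests_empty: "forests S {} = (if S = {} then {\<lambda>_. undefined} else {})"
  unfolding forests_def by auto

lemma comb_in:
  assumes aR: "a \<in> R" and aS: "a \<in> S" and AU: "A \<subseteq> S - R"
    and g: "g \<in> forests (S - {a}) (R - {a} \<union> A)"
    and ts: "ts \<in> permutations_of_set (g ` A)"
  shows "comb a R (A, g, ts) \<in> forests S R"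
proof -
  let ?f = "comb a R (A, g, ts)"
  have fa: "?f a = PNode a ts" by (simp add: comb_def)
  have fv: "\<And>v. v \<in> R - {a} \<Longrightarrow> ?f v = g v" by (auto simp: comb_def)
  have st: "set ts = g ` A" and dts: "distinct ts" using ts by (auto simp: permutations_of_set_def)
  have gl: "\<And>v. v \<in> R - {a} \<union> A \<Longrightarrow> set (labels (g v)) \<subseteq> S - {a}"
    using forestsD(5)[OF g] by blast
  have AR: "A \<inter> R = {}" using AU by blast
  have la: "set (labels (?f a)) = insert a (\<Union>u\<in>A. set (labels (g u)))"
    using fa st by auto
  have distA: "\<And>u u'. u \<in> A \<Longrightarrow> u' \<in> A \<Longrightarrow> g u \<noteq> g u' \<Longrightarrow> set (labels (g u)) \<inter> set (labels (g u')) = {}"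
  proof -
    fix u u' assume "u \<in> A" "u' \<in> A" "g u \<noteq> g u'"
    then show "set (labels (g u)) \<inter> set (labels (g u')) = {}"
      using forestsD(4)[OF g, of u u'] by auto
  qed
  have dfa: "distinct (labels (PNode a ts))"
    unfolding dist_PNode
  proof (intro conjI)
    show "a \<notin> (\<Union>s\<in>set ts. set (labels s))" using gl st by auto
    show "distinct ts" by (rule dts)
    show "\<forall>s\<in>set ts. distinct (labels s)" using st forestsD(3)[OF g] by auto
    show "\<forall>s\<in>set ts. \<forall>s'\<in>set ts. s \<noteq> s' \<longrightarrow> set (labels s) \<inter> set (labels s') = {}"
      using st distA by auto
  qed
  show ?thesis
  proof (rule forestsI)
    fix v assume "v \<notin> R" then show "?f v = undefined" using aR by (auto simp: comb_def)
  next
    fix v assume v: "v \<in> R"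
    show "Defs.root (?f v) = v"
      using fa fv[of v] forestsD(2)[OF g, of v] v by (cases "v = a") auto
    show "distinct (labels (?f v))"
      using fa fv[of v] forestsD(3)[OF g, of v] v dfa by (cases "v = a") auto
  next
    have key: "\<And>w. w \<in> R - {a} \<Longrightarrow> set (labels (?f a)) \<inter> set (labels (?f w)) = {}"
    proof -
      fix w assume w: "w \<in> R - {a}"
      have "a \<notin> set (labels (g w))" using gl[of w] w by auto
      moreover have "\<And>u. u \<in> A \<Longrightarrow> set (labels (g u)) \<inter> set (labels (g w)) = {}"
        using forestsD(4)[OF g] w AR by blast
      ultimately show "set (labels (?f a)) \<inter> set (labels (?f w)) = {}"
        unfolding la fv[OF w] by blast
    qed
    fix v w assume v: "v \<in> R" and w: "w \<in> R" and vw: "v \<noteq> w"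
    show "set (labels (?f v)) \<inter> set (labels (?f w)) = {}"
    proof (cases "v = a")
      case True then show ?thesis using key[of w] w vw by auto
    next
      case False
      show ?thesis
      proof (cases "w = a")
        case True then show ?thesis using key[of v] v False by auto
      next
        case False
        then show ?thesis using \<open>v \<noteq> a\<close> fv[of v] fv[of w] v w vw forestsD(4)[OF g, of v w] by auto
      qed
    qed
  next
    have R: "R = insert a (R - {a})" using aR by blast
    have "(\<Union>v\<in>R. set (labels (?f v))) = set (labels (?f a)) \<union> (\<Union>v\<in>R - {a}. set (labels (?f v)))"
      by (subst R) (simp only: UN_insert)
    also have "(\<Union>v\<in>R - {a}. set (labels (?f v))) = (\<Union>v\<in>R - {a}. set (labels (g v)))"
      by (rule SUP_cong[OF refl]) (simp add: fv)
    also have "set (labels (?f a)) \<union> (\<Union>v\<in>R - {a}. set (labels (g v))) = insert a ((\<Union>u\<in>A. set (labels (g u))) \<union> (\<Union>v\<in>R - {a}. set (labels (g v))))"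
      unfolding la by simp
    also have "(\<Union>u\<in>A. set (labels (g u))) \<union> (\<Union>v\<in>R - {a}. set (labels (g v))) = S - {a}"
      using forestsD(5)[OF g] by (simp only: UN_Un Un_commute)
    finally show "(\<Union>v\<in>R. set (labels (?f v))) = S" using aS by (simp add: insert_absorb)
  qed
qed

lemma fa_eq:
  assumes f: "f \<in> forests S R" and aR: "a \<in> R"
  shows "f a = PNode a (children (f a))"
  using forestsD(2)[OF f aR] by (cases "f a") auto

lemma dec_in:
  assumes f: "f \<in> forests S R" and aR: "a \<in> R"
  defines "ts \<equiv> children (f a)"
  defines "A \<equiv> Defs.root ` set ts"
  defines "g \<equiv> (\<lambda>v. if v \<in> R - {a} then f v else if v \<in> A then chl ts v else undefined)"
  shows "dec a R f = (A, g, ts)" "A \<subseteq> S - R" "g \<in> forests (S - {a}) (R - {a} \<union> A)"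
    "ts \<in> permutations_of_set (g ` A)"
proof -
  show "dec a R f = (A, g, ts)" unfolding dec_def ts_def A_def g_def by simp
  have fa: "f a = PNode a ts" using fa_eq[OF f aR] ts_def by simp
  have dfa: "distinct (labels (PNode a ts))" using forestsD(3)[OF f aR] fa by simp
  then have aN: "a \<notin> (\<Union>s\<in>set ts. set (labels s))" and dts: "distinct ts"
    and dss: "\<forall>s\<in>set ts. distinct (labels s)"
    and disj: "\<forall>s\<in>set ts. \<forall>s'\<in>set ts. s \<noteq> s' \<longrightarrow> set (labels s) \<inter> set (labels s') = {}"
    unfolding dist_PNode by auto
  have la: "set (labels (f a)) = insert a (\<Union>s\<in>set ts. set (labels s))" using fa by simp
  have sub: "\<And>s. s \<in> set ts \<Longrightarrow> set (labels s) \<subseteq> set (labels (f a))" using la by blast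
  have faS: "set (labels (f a)) \<subseteq> S" using forestsD(5)[OF f] aR by blast
  have dis_a: "\<And>w. w \<in> R - {a} \<Longrightarrow> set (labels (f a)) \<inter> set (labels (f w)) = {}"
    using forestsD(4)[OF f] aR by blast
  have AR: "A \<inter> R = {}"
  proof (rule ccontr)
    assume "A \<inter> R \<noteq> {}"
    then obtain s where s: "s \<in> set ts" "Defs.root s \<in> R" unfolding A_def by blast
    have rs: "Defs.root s \<in> set (labels (f a))" using sub[OF s(1)] root_in[of s] by blast
    show False
    proof (cases "Defs.root s = a")
      case True then show False using aN s(1) root_in[of s] by auto
    next
      case False
      then have "Defs.root s \<in> set (labels (f (Defs.root s)))"
        using root_in[of "f (Defs.root s)"] forestsD(2)[OF f s(2)] by simp
      then show False using dis_a[of "Defs.root s"] False s(2) rs by blast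
    qed
  qed
  show "A \<subseteq> S - R"
  proof -
    have "A \<subseteq> S" unfolding A_def using sub faS root_in by blast
    then show ?thesis using AR by blast
  qed
  have gA: "\<And>s. s \<in> set ts \<Longrightarrow> g (Defs.root s) = s"
  proof -
    fix s assume s: "s \<in> set ts"
    have "Defs.root s \<notin> R - {a}" using AR s unfolding A_def by blast
    moreover have "Defs.root s \<in> A" using s unfolding A_def by blast
    ultimately show "g (Defs.root s) = s" unfolding g_def using chl_eq[OF disj s] by auto
  qed
  have gR: "\<And>v. v \<in> R - {a} \<Longrightarrow> g v = f v" unfolding g_def by simp
  have gimg: "g ` A = set ts" unfolding A_def image_image using gA by simp
  show "ts \<in> permutations_of_set (g ` A)" unfolding gimg permutations_of_set_def using dts by simp
  show "g \<in> forests (S - {a}) (R - {a} \<union> A)"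
  proof (rule forestsI)
    fix v assume "v \<notin> R - {a} \<union> A" then show "g v = undefined" unfolding g_def by auto
  next
    fix v assume v: "v \<in> R - {a} \<union> A"
    show "Defs.root (g v) = v"
    proof (cases "v \<in> R - {a}")
      case True then show ?thesis using gR forestsD(2)[OF f] by simp
    next
      case False
      then obtain s where "s \<in> set ts" "v = Defs.root s" using v unfolding A_def by blast
      then show ?thesis using gA by simp
    qed
    show "distinct (labels (g v))"
    proof (cases "v \<in> R - {a}")
      case True then show ?thesis using gR forestsD(3)[OF f] by simp
    next
      case False
      then obtain s where "s \<in> set ts" "v = Defs.root s" using v unfolding A_def by blast
      then show ?thesis using gA dss by simp
    qed
  next
    fix v w assume v: "v \<in> R - {a} \<union> A" and w: "w \<in> R - {a} \<union> A" and vw: "v \<noteq> w"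
    have Lin: "\<And>u. u \<in> A \<Longrightarrow> g u \<in> set ts \<and> set (labels (g u)) \<subseteq> set (labels (f a))"
    proof -
      fix u assume "u \<in> A"
      then obtain s where s: "s \<in> set ts" "u = Defs.root s" unfolding A_def by blast
      then show "g u \<in> set ts \<and> set (labels (g u)) \<subseteq> set (labels (f a))" using gA sub by simp
    qed
    show "set (labels (g v)) \<inter> set (labels (g w)) = {}"
    proof (cases "v \<in> R - {a}")
      case vR: True
      show ?thesis
      proof (cases "w \<in> R - {a}")
        case True then show ?thesis using vR gR forestsD(4)[OF f, of v w] vw by simp
      next
        case False
        then have "w \<in> A" using w by blast
        then have "set (labels (g w)) \<subseteq> set (labels (f a))" using Lin by simp
        then show ?thesis using dis_a[OF vR] gR[OF vR] by auto
      qed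
    next
      case vA: False
      then have vA: "v \<in> A" using v by blast
      show ?thesis
      proof (cases "w \<in> R - {a}")
        case True
        have "set (labels (g v)) \<subseteq> set (labels (f a))" using Lin vA by simp
        then show ?thesis using dis_a[OF True] gR[OF True] by auto
      next
        case False
        then have wA: "w \<in> A" using w by blast
        have "g v \<noteq> g w"
        proof
          assume "g v = g w"
          then have "Defs.root (g v) = Defs.root (g w)" by simp
          moreover obtain s where "s \<in> set ts" "v = Defs.root s" using vA unfolding A_def by blast
          moreover obtain s' where "s' \<in> set ts" "w = Defs.root s'" using wA unfolding A_def by blast
          ultimately show False using gA vw by simp
        qed
        moreover have "g v \<in> set ts" "g w \<in> set ts" using Lin[OF vA] Lin[OF wA] by simp_all
        ultimately show ?thesis using disj by simp
      qed
    qed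
  next
    have "(\<Union>v\<in>R - {a} \<union> A. set (labels (g v))) = (\<Union>v\<in>R - {a}. set (labels (f v))) \<union> (\<Union>s\<in>set ts. set (labels s))"
    proof -
      have "(\<Union>v\<in>R - {a}. set (labels (g v))) = (\<Union>v\<in>R - {a}. set (labels (f v)))"
        by (rule SUP_cong[OF refl]) (simp add: gR)
      moreover have "(\<Union>v\<in>A. set (labels (g v))) = (\<Union>s\<in>set ts. set (labels s))"
        unfolding gimg[symmetric] by (simp add: image_image)
      ultimately show ?thesis by (simp only: UN_Un)
    qed
    also have "\<dots> = S - {a}"
    proof -
      have R: "R = insert a (R - {a})" using aR by blast
      have "S = set (labels (f a)) \<union> (\<Union>v\<in>R - {a}. set (labels (f v)))"
        using forestsD(5)[OF f] by (subst (asm) R) (simp only: UN_insert)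
      moreover have "a \<notin> (\<Union>v\<in>R - {a}. set (labels (f v)))" using dis_a la by blast
      ultimately show ?thesis using la aN by blast
    qed
    finally show "(\<Union>v\<in>R - {a} \<union> A. set (labels (g v))) = S - {a}" .
  qed
qed

lemma comb_dec:
  assumes f: "f \<in> forests S R" and aR: "a \<in> R"
  shows "comb a R (dec a R f) = f"
proof
  fix v
  show "comb a R (dec a R f) v = f v"
    using fa_eq[OF f aR] forestsD(1)[OF f, of v] unfolding comb_def dec_def by auto
qed

lemma dec_comb:
  assumes aR: "a \<in> R" and aS: "a \<in> S" and AU: "A \<subseteq> S - R"
    and g: "g \<in> forests (S - {a}) (R - {a} \<union> A)"
    and ts: "ts \<in> permutations_of_set (g ` A)"
  shows "dec a R (comb a R (A, g, ts)) = (A, g, ts)"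
proof -
  let ?f = "comb a R (A, g, ts)"
  have fa: "?f a = PNode a ts" by (simp add: comb_def)
  have fv: "\<And>v. v \<in> R - {a} \<Longrightarrow> ?f v = g v" by (auto simp: comb_def)
  have st: "set ts = g ` A" using ts by (auto simp: permutations_of_set_def)
  have AR: "A \<inter> R = {}" using AU by blast
  have ff: "?f \<in> forests S R" by (rule comb_in[OF aR aS AU g ts])
  have dfa: "distinct (labels (PNode a ts))" using forestsD(3)[OF ff aR] fa by simp
  then have disj: "\<forall>s\<in>set ts. \<forall>s'\<in>set ts. s \<noteq> s' \<longrightarrow> set (labels s) \<inter> set (labels s') = {}"
    unfolding dist_PNode by auto
  have rA: "Defs.root ` set ts = A"
    unfolding st image_image using forestsD(2)[OF g] by (simp cong: image_cong)
  have "(\<lambda>v. if v \<in> R - {a} then ?f v else if v \<in> A then chl ts v else undefined) = g"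
  proof
    fix v
    show "(if v \<in> R - {a} then ?f v else if v \<in> A then chl ts v else undefined) = g v"
    proof (cases "v \<in> R - {a}")
      case True then show ?thesis using fv by simp
    next
      case False
      show ?thesis
      proof (cases "v \<in> A")
        case True
        then have "g v \<in> set ts" using st by blast
        moreover have "Defs.root (g v) = v" using forestsD(2)[OF g] True by blast
        ultimately show ?thesis using chl_eq[OF disj, of "g v"] False True by auto
      next
        case False2: False
        then show ?thesis using False forestsD(1)[OF g, of v] by auto
      qed
    qed
  qed
  moreover have "dec a R ?f = (Defs.root ` set ts, (\<lambda>v. if v \<in> R - {a} then ?f v else if v \<in> Defs.root ` set ts then chl ts v else undefined), ts)"
    unfolding dec_def fa Defs.children.simps by (rule refl)
  ultimately show ?thesis unfolding rA by simp
qed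

definition GF :: "'a::comm_ring_1 \<Rightarrow> (nat \<Rightarrow> 'a) \<Rightarrow> nat set \<Rightarrow> nat set \<Rightarrow> 'a" where
  "GF t x S R = (\<Sum>f\<in>forests S R. \<Prod>v\<in>R. wt t x (f v))"

lemma beta_in: "beta T \<in> set (labels T)"
  unfolding beta_def using labels_ne[of T] by (intro Min_in) auto

lemma weight_comb:
  assumes aR: "a \<in> R" and aS: "a \<in> S" and AU: "A \<subseteq> S - R" and fin: "finite S" and RS: "R \<subseteq> S"
    and g: "g \<in> forests (S - {a}) (R - {a} \<union> A)"
    and ts: "ts \<in> permutations_of_set (g ` A)"
  shows "(\<Prod>v\<in>R. wt t x (comb a R (A, g, ts) v))
     = (t ^ eld_children ts * x a ^ (length ts - eld_children ts)) * (\<Prod>v\<in>R - {a} \<union> A. wt t x (g v))"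
proof -
  have finR: "finite R" "finite A" using fin AU RS by (auto intro: finite_subset)
  have fv: "\<And>v. v \<in> R - {a} \<Longrightarrow> comb a R (A, g, ts) v = g v" by (auto simp: comb_def)
  have st: "set ts = g ` A" and dts: "distinct ts" using ts by (auto simp: permutations_of_set_def)
  have injg: "inj_on g A"
  proof (rule inj_onI)
    fix u u' assume "u \<in> A" "u' \<in> A" "g u = g u'"
    then have "Defs.root (g u) = u" "Defs.root (g u') = u'" using forestsD(2)[OF g] by blast+
    then show "u = u'" using \<open>g u = g u'\<close> by metis
  qed
  have e1: "(\<Prod>v\<in>R. wt t x (comb a R (A, g, ts) v)) = wt t x (comb a R (A, g, ts) a) * (\<Prod>v\<in>R - {a}. wt t x (comb a R (A, g, ts) v))"
    using finR(1) aR by (rule prod.remove)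
  have e2: "(\<Prod>v\<in>R - {a}. wt t x (comb a R (A, g, ts) v)) = (\<Prod>v\<in>R - {a}. wt t x (g v))"
    by (rule prod.cong[OF refl]) (simp add: fv)
  have e3: "wt t x (comb a R (A, g, ts) a) = (t ^ eld_children ts * x a ^ (length ts - eld_children ts)) * prod_list (map (wt t x) ts)"
    unfolding comb_def by simp
  have e4: "prod_list (map (wt t x) ts) = (\<Prod>s\<in>set ts. wt t x s)"
    using dts by (simp add: prod.distinct_set_conv_list)
  have e5: "(\<Prod>s\<in>set ts. wt t x s) = (\<Prod>u\<in>A. wt t x (g u))"
    unfolding st using injg by (simp add: prod.reindex)
  have e6: "(\<Prod>v\<in>R - {a} \<union> A. wt t x (g v)) = (\<Prod>v\<in>R - {a}. wt t x (g v)) * (\<Prod>u\<in>A. wt t x (g u))"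
    using finR AU by (intro prod.union_disjoint) auto
  show ?thesis unfolding e1 e2 e3 e4 e5 e6 by (simp only: ac_simps)
qed

lemma GF_rec:
  fixes t :: "'a::comm_ring_1"
  assumes fin: "finite S" and RS: "R \<subseteq> S" and aR: "a \<in> R"
  shows "GF t x S R = (\<Sum>A\<in>Pow (S - R). rf t (x a) (card A) * GF t x (S - {a}) (R - {a} \<union> A))"
proof -
  have aS: "a \<in> S" using aR RS by blast
  define DU where "DU = Sigma (Pow (S - R)) (\<lambda>A. Sigma (forests (S - {a}) (R - {a} \<union> A)) (\<lambda>g. permutations_of_set (g ` A)))"
  have bij: "bij_betw (comb a R) DU (forests S R)"
  proof (rule bij_betw_byWitness[where f' = "dec a R"])
    show "\<forall>z\<in>DU. dec a R (comb a R z) = z"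
      unfolding DU_def using dec_comb[OF aR aS] by auto
    show "\<forall>f\<in>forests S R. comb a R (dec a R f) = f"
      using comb_dec aR by blast
    show "comb a R ` DU \<subseteq> forests S R"
      unfolding DU_def using comb_in[OF aR aS] by auto
    show "dec a R ` forests S R \<subseteq> DU"
    proof
      fix z assume "z \<in> dec a R ` forests S R"
      then obtain f where f: "f \<in> forests S R" and z: "z = dec a R f" by blast
      show "z \<in> DU" unfolding DU_def z using dec_in[OF f aR] by auto
    qed
  qed
  let ?W = "\<lambda>R f. \<Prod>v\<in>R. wt t x (f v)"
  have finA: "\<And>A. A \<in> Pow (S - R) \<Longrightarrow> finite A" using fin by (auto intro: finite_subset)
  have finF: "\<And>A. A \<in> Pow (S - R) \<Longrightarrow> finite (forests (S - {a}) (R - {a} \<union> A))"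
    using fin RS finA by (intro forests_finite) (auto intro: finite_subset)
  have "GF t x S R = (\<Sum>z\<in>DU. ?W R (comb a R z))"
    unfolding GF_def by (rule sum.reindex_bij_betw[symmetric, OF bij])
  also have "\<dots> = (\<Sum>A\<in>Pow (S - R). \<Sum>g\<in>forests (S - {a}) (R - {a} \<union> A). \<Sum>ts\<in>permutations_of_set (g ` A). ?W R (comb a R (A, g, ts)))"
  proof -
    define h where "h = (\<lambda>z. ?W R (comb a R z))"
    have inner: "\<And>A. A \<in> Pow (S - R) \<Longrightarrow> (\<Sum>g\<in>forests (S - {a}) (R - {a} \<union> A). \<Sum>ts\<in>permutations_of_set (g ` A). h (A, g, ts))
        = (\<Sum>gts\<in>Sigma (forests (S - {a}) (R - {a} \<union> A)) (\<lambda>g. permutations_of_set (g ` A)). h (A, gts))"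
    proof -
      fix A assume A: "A \<in> Pow (S - R)"
      have "(\<Sum>g\<in>forests (S - {a}) (R - {a} \<union> A). \<Sum>ts\<in>permutations_of_set (g ` A). h (A, g, ts))
          = (\<Sum>gts\<in>Sigma (forests (S - {a}) (R - {a} \<union> A)) (\<lambda>g. permutations_of_set (g ` A)). (\<lambda>g ts. h (A, g, ts)) (fst gts) (snd gts))"
        using sum.Sigma[of "forests (S - {a}) (R - {a} \<union> A)" "\<lambda>g. permutations_of_set (g ` A)" "\<lambda>g ts. h (A, g, ts)"]
          finF[OF A] finA[OF A] by (simp add: split_def)
      then show "?thesis A" by simp
    qed
    have "(\<Sum>A\<in>Pow (S - R). \<Sum>g\<in>forests (S - {a}) (R - {a} \<union> A). \<Sum>ts\<in>permutations_of_set (g ` A). h (A, g, ts))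
        = (\<Sum>A\<in>Pow (S - R). \<Sum>gts\<in>Sigma (forests (S - {a}) (R - {a} \<union> A)) (\<lambda>g. permutations_of_set (g ` A)). h (A, gts))"
      by (rule sum.cong[OF refl]) (rule inner)
    also have "\<dots> = (\<Sum>z\<in>DU. (\<lambda>A gts. h (A, gts)) (fst z) (snd z))"
      unfolding DU_def
      using sum.Sigma[of "Pow (S - R)" "\<lambda>A. Sigma (forests (S - {a}) (R - {a} \<union> A)) (\<lambda>g. permutations_of_set (g ` A))" "\<lambda>A gts. h (A, gts)"]
        fin finF finA by (simp add: split_def)
    also have "\<dots> = (\<Sum>z\<in>DU. h z)" by simp
    finally show ?thesis unfolding h_def by simp
  qed
  also have "\<dots> = (\<Sum>A\<in>Pow (S - R). \<Sum>g\<in>forests (S - {a}) (R - {a} \<union> A). rf t (x a) (card A) * ?W (R - {a} \<union> A) g)"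
  proof (intro sum.cong[OF refl])
    fix A g assume A: "A \<in> Pow (S - R)" and g: "g \<in> forests (S - {a}) (R - {a} \<union> A)"
    have AU: "A \<subseteq> S - R" using A by blast
    have injb: "inj_on beta (g ` A)"
    proof (rule inj_onI)
      fix s s' assume s: "s \<in> g ` A" and s': "s' \<in> g ` A" and b: "beta s = beta s'"
      obtain u where u: "u \<in> A" "s = g u" using s by blast
      obtain u' where u': "u' \<in> A" "s' = g u'" using s' by blast
      show "s = s'"
      proof (rule ccontr)
        assume "s \<noteq> s'"
        then have "u \<noteq> u'" using u u' by blast
        then have "set (labels s) \<inter> set (labels s') = {}" using forestsD(4)[OF g, of u u'] u u' by blast
        then show False using beta_in[of s] beta_in[of s'] b by auto
      qed
    qed
    have injg: "inj_on g A"
    proof (rule inj_onI)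
      fix u u' assume "u \<in> A" "u' \<in> A" "g u = g u'"
      then have "Defs.root (g u) = u" "Defs.root (g u') = u'" using forestsD(2)[OF g] by blast+
      then show "u = u'" using \<open>g u = g u'\<close> by metis
    qed
    have "(\<Sum>ts\<in>permutations_of_set (g ` A). ?W R (comb a R (A, g, ts)))
        = (\<Sum>ts\<in>permutations_of_set (g ` A). (t ^ eld_children ts * x a ^ (length ts - eld_children ts)) * ?W (R - {a} \<union> A) g)"
      by (rule sum.cong[OF refl]) (rule weight_comb[OF aR aS AU fin RS g])
    also have "\<dots> = (\<Sum>ts\<in>permutations_of_set (g ` A). t ^ eld_children ts * x a ^ (length ts - eld_children ts)) * ?W (R - {a} \<union> A) g"
      by (simp add: sum_distrib_right)
    also have "\<dots> = rf t (x a) (card A) * ?W (R - {a} \<union> A) g"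
      using perm_sum[of "g ` A" t "x a"] finA[OF A] injb card_image[OF injg] by simp
    finally show "(\<Sum>ts\<in>permutations_of_set (g ` A). ?W R (comb a R (A, g, ts))) = rf t (x a) (card A) * ?W (R - {a} \<union> A) g" .
  qed
  also have "\<dots> = (\<Sum>A\<in>Pow (S - R). rf t (x a) (card A) * GF t x (S - {a}) (R - {a} \<union> A))"
    unfolding GF_def by (simp add: sum_distrib_left)
  finally show ?thesis .
qed

lemma GF_empty: "GF t x S {} = (if S = {} then 1 else 0)"
  unfolding GF_def forests_empty by simp

lemma GF_closed:
  fixes t :: "'a::comm_ring_1"
  assumes "finite S" "R \<subseteq> S"
  shows "GF t x S R = (if S = R then 1 else sum x R * rf t (sum x S + t) (card (S - R) - 1))"
  using assms
proof (induction "card S" arbitrary: S R rule: less_induct)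
  case less
  note fin = less.prems(1) and RS = less.prems(2)
  show ?case
  proof (cases "R = {}")
    case True
    then show ?thesis by (simp add: GF_empty)
  next
    case False
    then obtain a where aR: "a \<in> R" by blast
    have aS: "a \<in> S" using aR RS by blast
    define U where "U = S - R"
    define c where "c = sum x R - x a"
    have finU: "finite U" using fin U_def by simp
    have finR: "finite R" using fin RS by (rule finite_subset[rotated])
    have sR: "sum x R = c + x a" using finR aR by (simp add: c_def sum.remove)
    have sSa: "sum x (S - {a}) = c + sum x U"
    proof -
      have "S - {a} = (R - {a}) \<union> U" using RS aR U_def by blast
      moreover have "sum x (R - {a}) = c" using finR aR by (simp add: c_def sum_diff1)
      moreover have "sum x ((R - {a}) \<union> U) = sum x (R - {a}) + sum x U"
        using finR finU U_def by (intro sum.union_disjoint) auto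
      ultimately show ?thesis by simp
    qed
    have "GF t x S R = (\<Sum>A\<in>Pow U. rf t (x a) (card A) * GF t x (S - {a}) (R - {a} \<union> A))"
      unfolding U_def by (rule GF_rec[OF fin RS aR])
    also have "\<dots> = (\<Sum>A\<in>Pow U. rf t (x a) (card A) * (if A = U then 1 else (c + sum x A) * rf t (c + sum x U + t) (card U - card A - 1)))"
    proof (rule sum.cong[OF refl])
      fix A assume A: "A \<in> Pow U"
      have AU: "A \<subseteq> U" using A by blast
      have finA: "finite A" using finU AU by (rule finite_subset[rotated])
      have sub: "R - {a} \<union> A \<subseteq> S - {a}" using AU RS aR U_def by blast
      have lt: "card (S - {a}) < card S" using fin aS by (rule card_Diff1_less)
      have IH: "GF t x (S - {a}) (R - {a} \<union> A) = (if S - {a} = R - {a} \<union> A then 1 else sum x (R - {a} \<union> A) * rf t (sum x (S - {a}) + t) (card (S - {a} - (R - {a} \<union> A)) - 1))"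
        using less.hyps[OF lt, of "R - {a} \<union> A"] fin sub by simp
      have e1: "(S - {a} = R - {a} \<union> A) = (A = U)" using AU RS aR U_def by blast
      have e2: "S - {a} - (R - {a} \<union> A) = U - A" using U_def aR by blast
      have e3: "sum x (R - {a} \<union> A) = c + sum x A"
      proof -
        have "sum x (R - {a} \<union> A) = sum x (R - {a}) + sum x A"
          using finR finA AU U_def by (intro sum.union_disjoint) auto
        moreover have "sum x (R - {a}) = c" using finR aR by (simp add: c_def sum_diff1)
        ultimately show ?thesis by simp
      qed
      have e4: "card (U - A) = card U - card A" using finA AU by (simp add: card_Diff_subset)
      show "rf t (x a) (card A) * GF t x (S - {a}) (R - {a} \<union> A) = rf t (x a) (card A) * (if A = U then 1 else (c + sum x A) * rf t (c + sum x U + t) (card U - card A - 1))"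
        unfolding IH e1 e2 e3 e4 sSa by simp
    qed
    also have "\<dots> = (if U = {} then 1 else (c + x a) * rf t (c + sum x U + x a + t) (card U - 1))"
      by (rule key_identity[OF finU])
    also have "\<dots> = (if S = R then 1 else sum x R * rf t (sum x S + t) (card (S - R) - 1))"
    proof -
      have "(U = {}) = (S = R)" using RS U_def by blast
      moreover have "sum x S = sum x R + sum x U"
        using sum.subset_diff[OF RS fin, of x] U_def by (simp add: add.commute)
      ultimately show ?thesis using sR U_def by (simp add: algebra_simps)
    qed
    finally show ?thesis .
  qed
qed

lemma forests_single_bij:
  "bij_betw (\<lambda>f. f r) (forests {1..n} {r}) (plane_trees n r)"
proof (rule bij_betw_byWitness[where f' = "\<lambda>T v. if v = r then T else undefined"])
  show "\<forall>f\<in>forests {1..n} {r}. (\<lambda>v. if v = r then f r else undefined) = f"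
    unfolding forests_def by auto
  show "\<forall>T\<in>plane_trees n r. (if r = r then T else undefined) = T" by simp
  show "(\<lambda>f. f r) ` forests {1..n} {r} \<subseteq> plane_trees n r"
    unfolding forests_def plane_trees_def by auto
  show "(\<lambda>T v. if v = r then T else undefined) ` plane_trees n r \<subseteq> forests {1..n} {r}"
  proof
    fix f assume "f \<in> (\<lambda>T v. if v = r then T else undefined) ` plane_trees n r"
    then obtain T where T: "T \<in> plane_trees n r" and f: "f = (\<lambda>v. if v = r then T else undefined)" by blast
    have T': "distinct (labels T)" "set (labels T) = {1..n}" "Defs.root T = r" using T unfolding plane_trees_def by auto
    show "f \<in> forests {1..n} {r}"
      by (rule forestsI) (use T' in \<open>simp_all add: f\<close>)
  qed
qed

lemma prod_shift: "(\<Prod>k=1..m. f k) = (\<Prod>i<m. f (Suc i))"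
proof -
  have "{1..m} = Suc ` {..<m}" by (auto simp: image_iff) (metis Suc_le_D Suc_le_mono lessThan_iff less_eq_Suc_le)
  then show ?thesis by (simp add: prod.reindex)
qed

theorem theorem4p6:
  fixes n r :: nat and t :: "'a::comm_ring_1" and x :: "nat \<Rightarrow> 'a"
  assumes "n \<ge> 2" and "r \<in> {1..n}"
  shows "(\<Sum>T\<in>plane_trees n r. t ^ eld T * (\<Prod>i=1..n. x i ^ young T i))
         = x r * (\<Prod>k=1..n-2. (\<Sum>i=1..n. x i) + of_nat k * t)"
proof -
  have "(\<Sum>T\<in>plane_trees n r. t ^ eld T * (\<Prod>i=1..n. x i ^ young T i)) = (\<Sum>T\<in>plane_trees n r. wt t x T)"
    by (rule sum.cong[OF refl]) (rule wt_eq, auto simp: plane_trees_def)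
  also have "\<dots> = (\<Sum>f\<in>forests {1..n} {r}. wt t x (f r))"
    by (rule sum.reindex_bij_betw[symmetric, OF forests_single_bij])
  also have "\<dots> = GF t x {1..n} {r}" unfolding GF_def by simp
  also have "\<dots> = x r * rf t (sum x {1..n} + t) (card ({1..n} - {r}) - 1)"
  proof -
    have "{1..n} \<noteq> {r}"
    proof
      assume "{1..n} = {r}"
      moreover have "1 \<in> {1..n}" "2 \<in> {1..n}" using assms by auto
      ultimately have "1 = r" "2 = r" by auto
      then show False by simp
    qed
    then show ?thesis using assms by (subst GF_closed) auto
  qed
  also have "card ({1..n} - {r}) - 1 = n - 2" using assms by simp
  also have "rf t (sum x {1..n} + t) (n - 2) = (\<Prod>k=1..n-2. (\<Sum>i=1..n. x i) + of_nat k * t)"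
    unfolding rf_def prod_shift by (simp add: algebra_simps)
  finally show ?thesis .
qed


end
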